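(* Let $a\in \mathcal{A}$. Then $a\in \mathcal{A}^{\mathrm{gcEP}}$ if and only if (1) $a\in \mathcal{A}^d$; and (2) there exists a projection $q\in \mathcal{A}$ such that $\ell(a^d)=\ell(q)$. In this case, $a^{\mathrm{gcEP}}=a^dq$.
   Context: $\mathcal{A}$ is a complex Banach *-algebra with identity; a projection is $q$ with $q=q^2=q^*$. $\mathcal{A}^d$ is the set of generalized Drazin invertible elements, with $a^d$ the generalized Drazin inverse ($a(a^d)^2=a^d$, $aa^d=a^da$, $a-a^2a^d$ quasinilpotent). $a$ has a generalized core-EP inverse if there is $x\in\mathcal{A}$ with $x=ax^2$, $(ax)^*=ax$, $\lim_{n\to\infty}\|a^n-xa^{n+1}\|^{1/n}=0$; this $x$ is unique, denoted $a^{\mathrm{gcEP}}$, and $\mathcal{A}^{\mathrm{gcEP}}$ is the set of such $a$. $\ell(\cdot)$ denotes the left annihilator. *)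

theory Defs
  imports "HOL-Analysis.Analysis"
begin

class complex_banach_star_algebra_1 = real_normed_algebra_1 + banach +
  fixes scaleC :: "complex \<Rightarrow> 'a \<Rightarrow> 'a"
    and star :: "'a \<Rightarrow> 'a"
  assumes scaleC_add_right: "scaleC c (x + y) = scaleC c x + scaleC c y"
    and scaleC_add_left: "scaleC (b + c) x = scaleC b x + scaleC c x"
    and scaleC_scaleC: "scaleC b (scaleC c x) = scaleC (b * c) x"
    and scaleC_one: "scaleC 1 x = x"
    and scaleC_of_real: "scaleC (complex_of_real r) x = scaleR r x"
    and scaleC_mult_left: "scaleC c x * y = scaleC c (x * y)"
    and scaleC_mult_right: "x * scaleC c y = scaleC c (x * y)"
    and norm_scaleC: "norm (scaleC c x) = cmod c * norm x"
    and star_star: "star (star x) = x"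
    and star_add: "star (x + y) = star x + star y"
    and star_mult: "star (x * y) = star y * star x"
    and star_scaleC: "star (scaleC c x) = scaleC (cnj c) (star x)"

definition quasinilpotent :: "'a::real_normed_algebra_1 \<Rightarrow> bool" where
  "quasinilpotent x \<longleftrightarrow> (\<lambda>n. norm (x ^ n) powr (1 / real n)) \<longlonglongrightarrow> 0"

definition is_gdrazin_inv :: "'a::real_normed_algebra_1 \<Rightarrow> 'a \<Rightarrow> bool" where
  "is_gdrazin_inv a x \<longleftrightarrow> a * x\<^sup>2 = x \<and> a * x = x * a \<and> quasinilpotent (a - a\<^sup>2 * x)"

definition gdrazin_set :: "'a::real_normed_algebra_1 set" where
  "gdrazin_set = {a. \<exists>x. is_gdrazin_inv a x}"

definition gdrazin :: "'a::real_normed_algebra_1 \<Rightarrow> 'a" where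
  "gdrazin a = (THE x. is_gdrazin_inv a x)"

definition projection :: "'a::complex_banach_star_algebra_1 \<Rightarrow> bool" where
  "projection q \<longleftrightarrow> q = q\<^sup>2 \<and> q = star q"

definition lann :: "'a::ring \<Rightarrow> 'a set" where
  "lann x = {y. y * x = 0}"

definition is_gcEP_inv :: "'a::complex_banach_star_algebra_1 \<Rightarrow> 'a \<Rightarrow> bool" where
  "is_gcEP_inv a x \<longleftrightarrow> x = a * x\<^sup>2 \<and> star (a * x) = a * x \<and>
     (\<lambda>n. norm (a ^ n - x * a ^ (n + 1)) powr (1 / real n)) \<longlonglongrightarrow> 0"

definition gcEP_set :: "'a::complex_banach_star_algebra_1 set" where
  "gcEP_set = {a. \<exists>x. is_gcEP_inv a x}"

definition gcEP :: "'a::complex_banach_star_algebra_1 \<Rightarrow> 'a" where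
  "gcEP a = (THE x. is_gcEP_inv a x)"

end

theory Submission
  imports Defs
begin


definition SG :: "(nat \<Rightarrow> real) \<Rightarrow> bool" where
  "SG t \<longleftrightarrow> (\<forall>e>0. eventually (\<lambda>n. t n \<le> e ^ n) sequentially)"

lemma SG_of_root:
  assumes nn: "\<And>n. t n \<ge> 0" and lim: "(\<lambda>n. t n powr (1/real n)) \<longlonglongrightarrow> 0"
  shows "SG t"
  unfolding SG_def
proof (intro allI impI)
  fix e :: real assume e: "e > 0"
  have ev1: "eventually (\<lambda>n. t n powr (1/real n) < e) sequentially"
    using order_tendstoD(2)[OF lim e] .
  have ev2: "eventually (\<lambda>n. n \<ge> 1) sequentially" by (rule eventually_ge_at_top)
  show "eventually (\<lambda>n. t n \<le> e ^ n) sequentially"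
    using ev1 ev2
  proof eventually_elim
    case (elim n)
    show ?case
    proof (cases "t n = 0")
      case True then show ?thesis using e by simp
    next
      case False
      then have tp: "t n > 0" using nn[of n] by linarith
      have "(t n powr (1/real n)) ^ n = (t n powr (1/real n)) powr (real n)"
        using tp by (simp add: powr_realpow)
      also have "\<dots> = t n" using elim(2) tp by (simp add: powr_powr)
      finally have "t n = (t n powr (1/real n)) ^ n" by simp
      also have "\<dots> \<le> e ^ n"
        using elim(1) by (intro power_mono) auto
      finally show ?thesis .
    qed
  qed
qed

lemma root_of_SG:
  assumes nn: "\<And>n. t n \<ge> 0" and sg: "SG t"
  shows "(\<lambda>n. t n powr (1/real n)) \<longlonglongrightarrow> 0"
proof (rule order_tendstoI)
  fix a :: real assume "a < 0"
  then show "eventually (\<lambda>n. a < t n powr (1/real n)) sequentially"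
    by (intro always_eventually allI) (smt (verit) powr_ge_zero)
next
  fix a :: real assume a: "0 < a"
  have ev1: "eventually (\<lambda>n. t n \<le> (a/2) ^ n) sequentially"
    using sg a unfolding SG_def by auto
  have ev2: "eventually (\<lambda>n. n \<ge> 1) sequentially" by (rule eventually_ge_at_top)
  show "eventually (\<lambda>n. t n powr (1/real n) < a) sequentially"
    using ev1 ev2
  proof eventually_elim
    case (elim n)
    have "t n powr (1/real n) \<le> ((a/2) ^ n) powr (1/real n)"
      using elim nn[of n] by (intro powr_mono2) auto
    also have "((a/2) ^ n) = (a/2) powr (real n)" using a by (simp add: powr_realpow)
    also have "((a/2) powr (real n)) powr (1/real n) = a/2"
      using elim(2) a by (simp add: powr_powr)
    finally show ?case using a by simp
  qed
qed

lemma SG_mono: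
  assumes sg: "SG s" and K: "K \<ge> 0"
    and ev: "eventually (\<lambda>n. t n \<le> K * s n) sequentially"
  shows "SG t"
  unfolding SG_def
proof (intro allI impI)
  fix e :: real assume e: "e > 0"
  have e': "e / (K+1) > 0" using e K by simp
  have ev1: "eventually (\<lambda>n. s n \<le> (e/(K+1)) ^ n) sequentially"
    using sg e' unfolding SG_def by auto
  have ev2: "eventually (\<lambda>n. n \<ge> 1) sequentially" by (rule eventually_ge_at_top)
  show "eventually (\<lambda>n. t n \<le> e ^ n) sequentially"
    using ev1 ev2 ev
  proof eventually_elim
    case (elim n)
    have "t n \<le> K * (e/(K+1)) ^ n"
      using elim(1,3) K by (meson mult_left_mono order_trans)
    also have "\<dots> = e ^ n * (K / (K+1) ^ n)" by (simp add: power_divide)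
    also have "\<dots> \<le> e ^ n * 1"
    proof -
      have "K + 1 \<le> (K+1) ^ n"
        using elim(2) K by (metis One_nat_def le_add_same_cancel2 power_increasing power_one_right zero_le_one)
      then have "K / (K+1) ^ n \<le> 1" using K by simp
      then show ?thesis using e by (intro mult_left_mono) auto
    qed
    finally show ?case by simp
  qed
qed

lemma SG_zero:
  fixes z :: "'a::real_normed_vector"
  assumes sg: "SG s" and K: "0 \<le> K" and C: "0 \<le> C"
    and b: "\<And>n. norm z \<le> K * s (n + k) * C ^ n"
  shows "z = 0"
proof -
  define e where "e = 1 / (2 * (C + 1))"
  have e0: "e > 0" and e1: "e \<le> 1" and eC: "e * C \<le> 1/2"
    using C by (auto simp: e_def field_simps)
  obtain N where N: "\<And>m. m \<ge> N \<Longrightarrow> s m \<le> e ^ m"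
    using sg e0 unfolding SG_def eventually_sequentially by blast
  have ev: "eventually (\<lambda>n. norm z \<le> K * (1/2) ^ n) sequentially"
    unfolding eventually_sequentially
  proof (intro exI allI impI)
    fix n assume "n \<ge> N"
    then have "s (n + k) \<le> e ^ (n + k)" by (intro N) simp
    also have "\<dots> \<le> e ^ n" using e0 e1 by (intro power_decreasing) auto
    finally have "s (n + k) * C ^ n \<le> e ^ n * C ^ n" using C by (intro mult_right_mono) auto
    also have "\<dots> = (e * C) ^ n" by (simp add: power_mult_distrib)
    also have "\<dots> \<le> (1/2) ^ n" using eC e0 C by (intro power_mono) auto
    finally have "K * (s (n + k) * C ^ n) \<le> K * (1/2) ^ n" using K by (intro mult_left_mono)
    then show "norm z \<le> K * (1/2) ^ n" using b[of n] by (simp add: mult.assoc)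
  qed
  have lim: "(\<lambda>n. K * (1/2::real) ^ n) \<longlonglongrightarrow> 0"
    by (intro tendsto_mult_right_zero LIMSEQ_power_zero) auto
  have "norm z \<le> 0"
    using tendsto_le[OF _ lim tendsto_const ev] by simp
  then show ?thesis by simp
qed

lemma SG_summable:
  assumes sg: "SG s" and nn: "\<And>n. s n \<ge> 0" and C: "0 \<le> C"
  shows "summable (\<lambda>n. s n * C ^ n)"
proof -
  define e where "e = 1 / (2 * (C + 1))"
  have e0: "e > 0" and eC: "e * C \<le> 1/2"
    using C by (auto simp: e_def field_simps)
  have ev: "eventually (\<lambda>n. s n \<le> e ^ n) sequentially" using sg e0 unfolding SG_def by auto
  show ?thesis
  proof (rule summable_comparison_test_ev)
    show "eventually (\<lambda>n. norm (s n * C ^ n) \<le> (1/2) ^ n) sequentially"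
      using ev
    proof eventually_elim
      case (elim n)
      have "norm (s n * C ^ n) = s n * C ^ n" using nn[of n] C by simp
      also have "\<dots> \<le> e ^ n * C ^ n" using elim C by (intro mult_right_mono) auto
      also have "\<dots> = (e * C) ^ n" by (simp add: power_mult_distrib)
      also have "\<dots> \<le> (1/2) ^ n" using eC e0 C by (intro power_mono) auto
      finally show ?case .
    qed
    show "summable (\<lambda>n. (1/2::real) ^ n)" by (rule summable_geometric) simp
  qed
qed



lemma comm_pow:
  fixes x y :: "'a::monoid_mult"
  assumes "x * y = y * x" shows "x ^ n * y = y * x ^ n"
proof (induction n)
  case 0 then show ?case by simp
next
  case (Suc n)
  have "x ^ Suc n * y = x * (x ^ n * y)" by (simp add: mult.assoc)
  also have "\<dots> = (x * y) * x ^ n" using Suc by (simp add: mult.assoc)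
  also have "\<dots> = y * x ^ Suc n" using assms by (simp add: mult.assoc)
  finally show ?case .
qed

lemma idem_pow:
  fixes a p :: "'a::monoid_mult"
  assumes pp: "p * p = p" and c: "a * p = p * a"
  shows "(a * p) ^ Suc n = a ^ Suc n * p"
proof (induction n)
  case 0 then show ?case by simp
next
  case (Suc n)
  have "(a * p) ^ Suc (Suc n) = a * p * (a ^ Suc n * p)" using Suc by simp
  also have "\<dots> = a * (p * a ^ Suc n) * p" by (simp add: mult.assoc)
  also have "\<dots> = a * (a ^ Suc n * p) * p"
  proof -
    have cp: "a ^ Suc n * p = p * a ^ Suc n" using comm_pow[OF c, of "Suc n"] .
    show ?thesis by (simp only: cp)
  qed
  also have "\<dots> = a ^ Suc (Suc n) * p" using pp by (simp add: mult.assoc)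
  finally show ?case .
qed

lemma quasinilpotent_SG:
  "quasinilpotent w \<longleftrightarrow> SG (\<lambda>n. norm (w ^ n))"
  unfolding quasinilpotent_def using SG_of_root root_of_SG by (metis norm_ge_zero)

lemma gd_pow1:
  fixes a d :: "'a::monoid_mult"
  assumes "a * d^2 = d" "a * d = d * a"
  shows "d ^ Suc n * a ^ n = d"
proof (induction n)
  case 0 then show ?case by simp
next
  case (Suc n)
  have dd: "d * d * a = d"
    using assms by (metis mult.assoc power2_eq_square)
  have "d ^ Suc (Suc n) * a ^ Suc n = d * (d ^ Suc n * a ^ n) * a"
    by (simp add: mult.assoc power_commutes)
  also have "\<dots> = d" using Suc dd by simp
  finally show ?case .
qed

lemma gd_pow2:
  fixes a d :: "'a::monoid_mult"
  assumes "a * d^2 = d" "a * d = d * a"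
  shows "a ^ n * d ^ Suc n = d"
proof -
  have c: "d ^ Suc n * a ^ n = a ^ n * d ^ Suc n"
    using comm_pow[of a "d ^ Suc n" n] comm_pow[of d a "Suc n"] assms(2) by metis
  show ?thesis using gd_pow1[OF assms, of n] c by simp
qed

lemma gd_annih:
  fixes a d1 d2 :: "'a::real_normed_algebra_1"
  assumes g1: "is_gdrazin_inv a d1" and g2: "is_gdrazin_inv a d2"
  shows "d1 * (1 - a * d2) = 0 \<and> (1 - a * d2) * d1 = 0"
proof -
  define p where "p = 1 - a * d2"
  have h2: "a * d2^2 = d2" "a * d2 = d2 * a" "quasinilpotent (a - a^2 * d2)"
    using g2 unfolding is_gdrazin_inv_def by auto
  have h1: "a * d1^2 = d1" "a * d1 = d1 * a"
    using g1 unfolding is_gdrazin_inv_def by auto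
  have ap: "a - a^2 * d2 = a * p" unfolding p_def by (simp add: algebra_simps power2_eq_square)
  have pc: "a * p = p * a"
  proof -
    have "a * p = a - a * (a * d2)" unfolding p_def by (simp add: algebra_simps)
    also have "\<dots> = a - (a * d2) * a" using h2(2) by (metis mult.assoc)
    also have "\<dots> = p * a" unfolding p_def by (simp add: algebra_simps)
    finally show ?thesis .
  qed
  have ee: "(a * d2) * (a * d2) = a * d2"
    using h2 by (metis mult.assoc power2_eq_square)
  have pp: "p * p = p" unfolding p_def using ee by (simp add: algebra_simps)
  have sg: "SG (\<lambda>n. norm ((a * p) ^ n))" using h2(3) ap quasinilpotent_SG by metis
  have z1: "d1 * p = 0"
  proof (rule SG_zero[OF sg, of "norm d1 ^ 2" "norm d1" _ 1])
    fix n
    have "d1 * p = d1 ^ Suc (Suc n) * a ^ Suc n * p" using gd_pow1[OF h1, of "Suc n"] by simp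
    also have "\<dots> = d1 ^ Suc (Suc n) * (a * p) ^ Suc n" using idem_pow[OF pp pc, of n] by (simp add: mult.assoc)
    finally have "norm (d1 * p) \<le> norm (d1 ^ Suc (Suc n)) * norm ((a * p) ^ Suc n)"
      by (metis norm_mult_ineq)
    also have "\<dots> \<le> norm d1 ^ Suc (Suc n) * norm ((a * p) ^ Suc n)"
      by (intro mult_right_mono norm_power_ineq) auto
    finally show "norm (d1 * p) \<le> norm d1 ^ 2 * norm ((a * p) ^ (n + 1)) * norm d1 ^ n"
      by (simp add: algebra_simps power2_eq_square)
  qed auto
  have z2: "p * d1 = 0"
  proof (rule SG_zero[OF sg, of "norm d1 ^ 2" "norm d1" _ 1])
    fix n
    have "p * d1 = p * a ^ Suc n * d1 ^ Suc (Suc n)" using gd_pow2[OF h1, of "Suc n"] by (simp add: mult.assoc)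
    also have "p * a ^ Suc n = (a * p) ^ Suc n" using idem_pow[OF pp pc, of n] comm_pow[OF pc, of "Suc n"] by simp
    finally have "norm (p * d1) \<le> norm ((a * p) ^ Suc n) * norm (d1 ^ Suc (Suc n))"
      by (metis norm_mult_ineq)
    also have "\<dots> \<le> norm ((a * p) ^ Suc n) * norm d1 ^ Suc (Suc n)"
      by (intro mult_left_mono norm_power_ineq) auto
    finally show "norm (p * d1) \<le> norm d1 ^ 2 * norm ((a * p) ^ (n + 1)) * norm d1 ^ n"
      by (simp add: algebra_simps power2_eq_square)
  qed auto
  show ?thesis using z1 z2 unfolding p_def by simp
qed

lemma gd_unique:
  fixes a d1 d2 :: "'a::real_normed_algebra_1"
  assumes g1: "is_gdrazin_inv a d1" and g2: "is_gdrazin_inv a d2"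
  shows "d1 = d2"
proof -
  have h1: "a * d1^2 = d1" "a * d1 = d1 * a"
    using g1 unfolding is_gdrazin_inv_def by auto
  have h2: "a * d2^2 = d2" "a * d2 = d2 * a"
    using g2 unfolding is_gdrazin_inv_def by auto
  have A: "d1 * (1 - a * d2) = 0" "(1 - a * d1) * d2 = 0"
    using gd_annih[OF g1 g2] gd_annih[OF g2 g1] by auto
  have e1: "a * d1 = a * d1 * (a * d2)"
  proof -
    have "d1 = d1 * (a * d2)" using A(1) by (simp add: algebra_simps)
    hence "a * d1 = a * (d1 * (a * d2))" by (metis)
    thus ?thesis by (metis mult.assoc)
  qed
  have e2: "a * d2 = a * d1 * (a * d2)"
  proof -
    have d2e: "d2 = a * d1 * d2" using A(2) by (simp add: algebra_simps)
    have "a * d1 * (a * d2) = a * (d1 * a) * d2" by (simp add: mult.assoc)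
    also have "\<dots> = a * (a * d1) * d2" using h1(2) by simp
    also have "\<dots> = a * (a * d1 * d2)" by (simp add: mult.assoc)
    also have "\<dots> = a * d2" using d2e by simp
    finally show ?thesis by simp
  qed
  have E: "a * d1 = a * d2" using e1 e2 by simp
  have "d1 = d1 * (a * d1)" using h1 by (metis mult.assoc power2_eq_square)
  also have "\<dots> = d1 * (a * d2)" using E by simp
  also have "\<dots> = (a * d1) * d2" using h1(2) by (simp add: mult.assoc)
  also have "\<dots> = (a * d2) * d2" using E by simp
  also have "\<dots> = d2" using h2 by (metis mult.assoc power2_eq_square)
  finally show ?thesis .
qed



lemma gcEP_back:
  fixes a d q :: "'a::complex_banach_star_algebra_1"
  assumes g: "is_gdrazin_inv a d" and pq: "projection q" and l: "lann d = lann q"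
  shows "is_gcEP_inv a (d * q)"
proof -
  have h: "a * d^2 = d" "a * d = d * a" "quasinilpotent (a - a^2 * d)"
    using g unfolding is_gdrazin_inv_def by auto
  have qq: "q * q = q" and sq: "star q = q"
    using pq unfolding projection_def by (auto simp: power2_eq_square)
  have dd: "a * (d * d) = d" using h(1) by (simp add: power2_eq_square)
  have "(1 - q) \<in> lann q" unfolding lann_def using qq by (simp add: algebra_simps)
  hence "(1 - q) * d = 0" using l unfolding lann_def by auto
  hence qd: "q * d = d" by (simp add: algebra_simps)
  have "(1 - d * a) * d = d - d * (a * d)" by (simp add: algebra_simps)
  also have "d * (a * d) = d" using dd h(2) by (metis mult.assoc)
  finally have "(1 - d * a) \<in> lann d" unfolding lann_def by simp
  hence "(1 - d * a) * q = 0" using l unfolding lann_def by auto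
  hence "q = d * a * q" by (simp add: algebra_simps)
  hence adq: "a * (d * q) = q" using h(2) by (metis mult.assoc)
  have dda: "d * d * a = d" using dd h(2) by (metis mult.assoc)
  have qad: "q * a * d = d * a" using qd h(2) by (metis mult.assoc)
  define p where "p = 1 - a * d"
  have ap: "a - a^2 * d = a * p" unfolding p_def by (simp add: algebra_simps power2_eq_square)
  have pc: "a * p = p * a"
  proof -
    have "a * p = a - a * (a * d)" unfolding p_def by (simp add: algebra_simps)
    also have "\<dots> = a - (a * d) * a" using h(2) by (metis mult.assoc)
    also have "\<dots> = p * a" unfolding p_def by (simp add: algebra_simps)
    finally show ?thesis .
  qed
  have ee: "(a * d) * (a * d) = a * d"
    using dd h(2) by (metis mult.assoc)
  have pp: "p * p = p" unfolding p_def using ee by (simp add: algebra_simps)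
  have sg: "SG (\<lambda>n. norm ((a * p) ^ n))" using h(3) ap quasinilpotent_SG by metis
  have key: "a ^ n - d * q * a ^ (n + 1) = (1 - d * q * a) * (a * p) ^ n" if n: "n \<ge> 1" for n
  proof -
    obtain m where m: "n = Suc m" using n by (cases n) auto
    define A where "A = a ^ Suc m"
    have c1: "A * d = d * A" unfolding A_def by (rule comm_pow[OF h(2)])
    have c2: "A * a = a * A" unfolding A_def by (rule power_commutes)
    have pw: "(a * p) ^ n = A * p" unfolding A_def m using idem_pow[OF pp pc] .
    have an1: "a ^ (n + 1) = A * a" unfolding A_def m by (metis Suc_eq_plus1 power_Suc2)
    have t2: "A * (a * d) = d * (A * a)"
    proof -
      have "A * (a * d) = A * (d * a)" using h(2) by simp
      also have "\<dots> = (A * d) * a" by (simp only: mult.assoc)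
      also have "\<dots> = (d * A) * a" using c1 by simp
      finally show ?thesis by (simp only: mult.assoc)
    qed
    have t: "d * q * a * (A * (a * d)) = d * (A * a)"
    proof -
      have "d * q * a * (A * (a * d)) = d * q * a * (d * (A * a))" using t2 by simp
      also have "\<dots> = d * (q * a * d) * (A * a)" by (simp only: mult.assoc)
      also have "\<dots> = d * (d * a) * (A * a)" using qad by simp
      also have "\<dots> = (d * d * a) * (A * a)" by (simp only: mult.assoc)
      also have "\<dots> = d * (A * a)" using dda by simp
      finally show ?thesis .
    qed
    have e1: "A * p = A - d * (A * a)" unfolding p_def using t2 by (simp add: right_diff_distrib)
    have e2: "d * q * a * (A * p) = d * q * a * A - d * (A * a)"
      unfolding p_def using t by (simp add: right_diff_distrib)
    have "(1 - d * q * a) * (a * p) ^ n = A * p - d * q * a * (A * p)"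
      unfolding pw by (simp add: left_diff_distrib)
    also have "\<dots> = A - d * q * a * A" by (subst e2, subst e1, simp)
    also have "d * q * a * A = d * q * (A * a)" using c2 by (simp add: mult.assoc)
    finally have X: "(1 - d * q * a) * (a * p) ^ n = A - d * q * (A * a)" .
    have an: "a ^ n = A" unfolding A_def m ..
    show ?thesis by (simp only: an an1 X)
  qed
  have sg2: "SG (\<lambda>n. norm (a ^ n - d * q * a ^ (n + 1)))"
  proof (rule SG_mono[OF sg, of "norm (1 - d * q * a)"])
    show "eventually (\<lambda>n. norm (a ^ n - d * q * a ^ (n + 1)) \<le> norm (1 - d * q * a) * norm ((a * p) ^ n)) sequentially"
      using eventually_ge_at_top[of 1]
    proof eventually_elim
      case (elim n)
      show ?case unfolding key[OF elim] by (rule norm_mult_ineq)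
    qed
  qed simp
  show ?thesis
    unfolding is_gcEP_inv_def
  proof (intro conjI)
    show "d * q = a * (d * q)^2"
    proof -
      have "a * (d * q)^2 = (a * (d * q)) * (d * q)" by (simp add: power2_eq_square mult.assoc)
      also have "\<dots> = (q * d) * q" using adq by (simp add: mult.assoc)
      finally show ?thesis using qd by simp
    qed
    show "star (a * (d * q)) = a * (d * q)" using adq sq by simp
    show "(\<lambda>n. norm (a ^ n - d * q * a ^ (n + 1)) powr (1 / real n)) \<longlonglongrightarrow> 0"
      using root_of_SG[OF _ sg2] by simp
  qed
qed



lemma gcEP_pow:
  fixes a x :: "'a::monoid_mult"
  assumes "x = a * x^2"
  shows "a ^ n * x ^ Suc n = x"
proof (induction n)
  case 0 then show ?case by simp
next
  case (Suc n)
  have "a * x ^ Suc (Suc n) = (a * x^2) * x ^ n" by (simp add: power2_eq_square mult.assoc)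
  also have "\<dots> = x ^ Suc n" using assms by simp
  finally have "a ^ Suc n * x ^ Suc (Suc n) = a ^ n * x ^ Suc n"
    by (simp add: power_Suc2 mult.assoc del: power_Suc)
  then show ?case using Suc by simp
qed

lemma gcEP_SG:
  fixes a x :: "'a::complex_banach_star_algebra_1"
  assumes "is_gcEP_inv a x"
  shows "SG (\<lambda>n. norm (a ^ n - x * a ^ (n + 1)))"
  using assms unfolding is_gcEP_inv_def by (intro SG_of_root) auto

lemma gcEP_G:
  fixes a x :: "'a::complex_banach_star_algebra_1"
  assumes g: "is_gcEP_inv a x"
  shows "x * a ^ Suc k * x = a ^ k * x"
proof -
  have xe: "x = a * x^2" using g unfolding is_gcEP_inv_def by auto
  define r where "r m = a ^ m - x * a ^ (m + 1)" for m
  have sg: "SG (\<lambda>m. norm (r m))" unfolding r_def by (rule gcEP_SG[OF g])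
  have "x * a ^ Suc k * x - a ^ k * x = 0"
  proof (rule SG_zero[OF sg, of "norm x" "norm x" _ k])
    fix n
    have xn: "x = a ^ n * x ^ Suc n" using gcEP_pow[OF xe] by simp
    have p1: "a ^ Suc k * a ^ n = a ^ (n + k + 1)"
      by (metis power_add add.commute add_Suc_right Suc_eq_plus1)
    have p2: "a ^ k * a ^ n = a ^ (n + k)" by (simp add: power_add[symmetric] add.commute)
    have "x * a ^ Suc k * x - a ^ k * x = x * a ^ Suc k * (a ^ n * x ^ Suc n) - a ^ k * (a ^ n * x ^ Suc n)"
      using xn by metis
    also have "\<dots> = (x * (a ^ Suc k * a ^ n) - a ^ k * a ^ n) * x ^ Suc n"
      by (simp add: algebra_simps del: power_Suc)
    also have "\<dots> = - (r (n + k) * x ^ Suc n)" unfolding p1 p2 r_def by (simp add: algebra_simps)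
    finally have "norm (x * a ^ Suc k * x - a ^ k * x) = norm (r (n + k) * x ^ Suc n)" by simp
    also have "\<dots> \<le> norm (r (n + k)) * norm (x ^ Suc n)" by (rule norm_mult_ineq)
    also have "\<dots> \<le> norm (r (n + k)) * norm x ^ Suc n"
      by (intro mult_left_mono norm_power_ineq) auto
    finally show "norm (x * a ^ Suc k * x - a ^ k * x) \<le> norm x * norm (r (n + k)) * norm x ^ n"
      by (simp add: algebra_simps)
  qed auto
  then show ?thesis by simp
qed

lemma gcEP_unique:
  fixes a x y :: "'a::complex_banach_star_algebra_1"
  assumes gx: "is_gcEP_inv a x" and gy: "is_gcEP_inv a y"
  shows "x = y"
proof -
  have half: "(1 - a * v) * (a * u) = 0" if gu: "is_gcEP_inv a u" and gv: "is_gcEP_inv a v" for u v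
  proof -
    have ue: "u = a * u^2" using gu unfolding is_gcEP_inv_def by auto
    define r where "r m = a ^ m - v * a ^ (m + 1)" for m
    have sg: "SG (\<lambda>m. norm (r m))" unfolding r_def by (rule gcEP_SG[OF gv])
    show ?thesis
    proof (rule SG_zero[OF sg, of "norm a * norm u" "norm u" _ 0])
      fix n
      have un: "u = a ^ n * u ^ Suc n" using gcEP_pow[OF ue] by simp
      have "(1 - a * v) * (a * u) = (1 - a * v) * (a * a ^ n) * u ^ Suc n"
        using un by (metis mult.assoc)
      also have "(1 - a * v) * (a * a ^ n) = a * r n"
        unfolding r_def by (simp add: algebra_simps power_commutes)
      finally have "norm ((1 - a * v) * (a * u)) = norm (a * r n * u ^ Suc n)" by simp
      also have "\<dots> \<le> norm (a * r n) * norm (u ^ Suc n)" by (rule norm_mult_ineq)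
      also have "\<dots> \<le> (norm a * norm (r n)) * norm u ^ Suc n"
        by (intro mult_mono norm_power_ineq norm_mult_ineq) auto
      finally show "norm ((1 - a * v) * (a * u)) \<le> norm a * norm u * norm (r (n + 0)) * norm u ^ n"
        by (simp add: algebra_simps)
    qed auto
  qed
  have q1: "a * x = a * y * (a * x)" using half[OF gx gy] by (simp add: algebra_simps)
  have q2: "a * y = a * x * (a * y)" using half[OF gy gx] by (simp add: algebra_simps)
  have sx: "star (a * x) = a * x" and sy: "star (a * y) = a * y"
    using gx gy unfolding is_gcEP_inv_def by auto
  have Q: "a * x = a * y"
  proof -
    have "a * x = star (a * x)" using sx by simp
    also have "\<dots> = star (a * y * (a * x))" using q1 by simp
    also have "\<dots> = star (a * x) * star (a * y)" by (simp add: star_mult)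
    also have "\<dots> = a * x * (a * y)" using sx sy by simp
    also have "\<dots> = a * y" using q2 by simp
    finally show ?thesis .
  qed
  have xax: "x * a * x = x" using gcEP_G[OF gx, of 0] by simp
  have xaax: "x * (a * (a * x)) = a * x" using gcEP_G[OF gx, of 1] by (simp add: mult.assoc)
  have ye: "y = a * (y * y)" using gy unfolding is_gcEP_inv_def by (simp add: power2_eq_square)
  have "x = x * (a * x)" using xax by (simp add: mult.assoc)
  also have "\<dots> = x * (a * y)" using Q by simp
  also have "\<dots> = x * (a * (a * (y * y)))" using ye by metis
  also have "\<dots> = x * (a * (a * y)) * y" by (simp add: mult.assoc)
  also have "\<dots> = a * y * y" using xaax Q by simp
  also have "\<dots> = y" using ye by (simp add: mult.assoc)
  finally show ?thesis .
qed



lemma gcEP_forward: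
  fixes a x :: "'a::complex_banach_star_algebra_1"
  assumes g: "is_gcEP_inv a x"
  shows "\<exists>d. is_gdrazin_inv a d \<and> lann d = lann (a * x) \<and> projection (a * x)"
proof -
  have xe: "x = a * x^2" and sq: "star (a * x) = a * x" using g unfolding is_gcEP_inv_def by auto
  define q where "q = a * x"
  define r where "r m = a ^ m - x * a ^ (m + 1)" for m
  have sg: "SG (\<lambda>m. norm (r m))" unfolding r_def by (rule gcEP_SG[OF g])
  have ax2: "a * (x * x) = x" using xe by (simp add: power2_eq_square)
  have xax: "x * a * x = x" using gcEP_G[OF g, of 0] by simp
  have qq: "q * q = q" unfolding q_def using xax by (simp add: mult.assoc)
  have qx: "q * x = x" unfolding q_def using ax2 by (simp add: mult.assoc)
  have xq: "x * q = x" unfolding q_def using xax by (simp add: mult.assoc)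
  have G1: "x * (a * q) = q" unfolding q_def using gcEP_G[OF g, of 1] by (simp add: mult.assoc)
  have H: "x ^ k * a ^ Suc k * x = q" for k
  proof (induction k)
    case 0 then show ?case unfolding q_def by simp
  next
    case (Suc k)
    have "x ^ Suc k * a ^ Suc (Suc k) * x = x ^ k * (x * a ^ Suc (Suc k) * x)"
      by (simp add: mult.assoc power_Suc2 del: power_Suc)
    also have "x * a ^ Suc (Suc k) * x = a ^ Suc k * x" by (rule gcEP_G[OF g])
    finally show ?case using Suc by (simp add: mult.assoc)
  qed
  have axp: "a * x ^ Suc (Suc k) = x ^ Suc k" for k
  proof -
    have "a * x ^ Suc (Suc k) = a * (x * x) * x ^ k" by (simp add: mult.assoc)
    also have "\<dots> = x ^ Suc k" using ax2 by simp
    finally show ?thesis .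
  qed
  define D where "D n = x ^ (n + 2) * a ^ (n + 1)" for n
  define E where "E n = x ^ (n + 1) * a ^ (n + 1)" for n
  have aD: "a * D n = E n" for n
    unfolding D_def E_def using axp[of n] by (simp add: mult.assoc[symmetric] del: power_Suc)
  have Da: "D n * a = E (Suc n)" for n
    unfolding D_def E_def by (simp add: mult.assoc power_Suc2 del: power_Suc)
  have ED: "E n * D n = D n" for n
  proof -
    have "E n * D n = x ^ (n + 1) * (a ^ (n + 1) * x ^ Suc (n + 1)) * a ^ (n + 1)"
      unfolding D_def E_def by (simp add: mult.assoc del: power_Suc)
    also have "a ^ (n + 1) * x ^ Suc (n + 1) = x" using gcEP_pow[OF xe] .
    finally show ?thesis unfolding D_def by (simp add: mult.assoc power_Suc2 del: power_Suc)
  qed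
  have Eq: "E n * q = q" for n
  proof -
    have "E n * q = x ^ (n + 1) * a ^ Suc (n + 1) * x"
      unfolding E_def q_def by (simp add: mult.assoc power_Suc2 del: power_Suc)
    then show ?thesis using H[of "n + 1"] by (simp only:)
  qed
  have qE: "q * E n = E n" for n
  proof -
    have "q * E n = a * (x * x ^ (n + 1)) * a ^ (n + 1)" unfolding q_def E_def by (simp add: mult.assoc)
    also have "a * (x * x ^ (n + 1)) = x ^ (n + 1)" using axp[of n] by simp
    finally show ?thesis unfolding E_def .
  qed
  have diff: "D (Suc n) - D n = x ^ (n + 3) * (a * (a * r n))" for n
  proof -
    have p3: "x ^ (n + 3) = x ^ (n + 2) * x"
    proof -
      have "n + 3 = Suc (n + 2)" by simp
      then show ?thesis by (simp only: power_Suc2)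
    qed
    have p2: "x ^ (n + 2) = x ^ (n + 1) * x"
    proof -
      have "n + 2 = Suc (n + 1)" by simp
      then show ?thesis by (simp only: power_Suc2)
    qed
    have x2: "x ^ (n + 2) = x ^ (n + 3) * (a * q)"
    proof -
      have "x ^ (n + 3) * (a * q) = x ^ (n + 2) * (x * (a * q))"
        unfolding p3 by (simp only: mult.assoc)
      also have "\<dots> = x ^ (n + 2) * q" using G1 by simp
      also have "\<dots> = x ^ (n + 1) * (x * q)" unfolding p2 by (simp only: mult.assoc)
      also have "\<dots> = x ^ (n + 2)" using xq p2 by simp
      finally show ?thesis by simp
    qed
    have "D n = x ^ (n + 3) * (a * (a * x * a ^ (n + 1)))"
      unfolding D_def x2 q_def by (simp add: mult.assoc)
    moreover have "D (Suc n) = x ^ (n + 3) * (a * (a * a ^ n))"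
    proof -
      have i1: "Suc n + 2 = n + 3" by simp
      have i2: "a ^ (Suc n + 1) = a * (a * a ^ n)" by simp
      show ?thesis unfolding D_def i1 i2 ..
    qed
    ultimately show ?thesis unfolding r_def by (simp add: algebra_simps)
  qed
  have sm: "summable (\<lambda>n. D (Suc n) - D n)"
  proof (rule summable_comparison_test'[where N=0])
    show "summable (\<lambda>n. (norm x ^ 3 * norm a ^ 2) * (norm (r n) * norm x ^ n))"
      by (intro summable_mult SG_summable[OF sg]) auto
    fix n :: nat
    have "norm (D (Suc n) - D n) \<le> norm (x ^ (n + 3)) * norm (a * (a * r n))"
      unfolding diff by (rule norm_mult_ineq)
    also have "\<dots> \<le> norm x ^ (n + 3) * (norm a * (norm a * norm (r n)))"
    proof (intro mult_mono norm_power_ineq)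
      show "norm (a * (a * r n)) \<le> norm a * (norm a * norm (r n))"
        by (metis mult_left_mono norm_ge_zero norm_mult_ineq order_trans)
    qed auto
    also have "\<dots> = (norm x ^ 3 * norm a ^ 2) * (norm (r n) * norm x ^ n)"
      by (simp add: power_add power2_eq_square algebra_simps)
    finally show "norm (D (Suc n) - D n) \<le> (norm x ^ 3 * norm a ^ 2) * (norm (r n) * norm x ^ n)" .
  qed
  define d where "d = D 0 + suminf (\<lambda>n. D (Suc n) - D n)"
  have LD: "D \<longlonglongrightarrow> d"
  proof -
    have "(\<lambda>n. D 0 + (\<Sum>i<n. D (Suc i) - D i)) \<longlonglongrightarrow> d"
      unfolding d_def by (intro tendsto_add tendsto_const summable_LIMSEQ[OF sm])
    moreover have "(\<lambda>n. D 0 + (\<Sum>i<n. D (Suc i) - D i)) = D"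
      by (rule ext) (simp add: sum_lessThan_telescope)
    ultimately show ?thesis by simp
  qed
  have LE: "E \<longlonglongrightarrow> a * d"
  proof -
    have "(\<lambda>n. a * D n) \<longlonglongrightarrow> a * d" by (intro tendsto_mult tendsto_const LD)
    then show ?thesis using aD by simp
  qed
  have comm: "a * d = d * a"
  proof -
    have "(\<lambda>n. D n * a) \<longlonglongrightarrow> d * a" by (intro tendsto_mult tendsto_const LD)
    hence "(\<lambda>n. E (Suc n)) \<longlonglongrightarrow> d * a" using Da by simp
    moreover have "(\<lambda>n. E (Suc n)) \<longlonglongrightarrow> a * d" using LIMSEQ_Suc[OF LE] .
    ultimately show ?thesis using LIMSEQ_unique by metis
  qed
  define e where "e = a * d"
  have eq: "e * q = q"
  proof -
    have "(\<lambda>n. E n * q) \<longlonglongrightarrow> e * q" unfolding e_def by (intro tendsto_mult tendsto_const LE)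
    moreover have "(\<lambda>n. E n * q) = (\<lambda>n. q)" using Eq by (intro ext)
    ultimately have "(\<lambda>n. q) \<longlonglongrightarrow> e * q" by simp
    then show ?thesis using LIMSEQ_unique[OF tendsto_const] by metis
  qed
  have qe: "q * e = e"
  proof -
    have "(\<lambda>n. q * E n) \<longlonglongrightarrow> q * e" unfolding e_def by (intro tendsto_mult tendsto_const LE)
    moreover have "(\<lambda>n. q * E n) = E" using qE by (intro ext)
    ultimately have "E \<longlonglongrightarrow> q * e" by simp
    then show ?thesis using LIMSEQ_unique LE unfolding e_def by blast
  qed
  have ed: "e * d = d"
  proof -
    have "(\<lambda>n. E n * D n) \<longlonglongrightarrow> e * d" unfolding e_def by (intro tendsto_mult LE LD)
    moreover have "(\<lambda>n. E n * D n) = D" using ED by (intro ext)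
    ultimately have "D \<longlonglongrightarrow> e * d" by simp
    then show ?thesis using LIMSEQ_unique LD by blast
  qed
  have ad2: "a * d^2 = d" using ed unfolding e_def by (simp add: power2_eq_square mult.assoc)
  have ee: "e * e = e"
  proof -
    have "e * e = a * (d * a) * d" unfolding e_def by (simp add: mult.assoc)
    also have "\<dots> = a * (e * d)" unfolding e_def using comm by (metis mult.assoc)
    finally show ?thesis using ed unfolding e_def by simp
  qed
  have ea: "e * a = a * e" unfolding e_def using comm by (metis mult.assoc)
  define pe where "pe = 1 - e"
  have pp: "pe * pe = pe" unfolding pe_def using ee by (simp add: algebra_simps)
  have pc: "a * pe = pe * a" unfolding pe_def using ea by (simp add: algebra_simps)
  have pq: "pe * q = 0" unfolding pe_def using eq by (simp add: algebra_simps)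
  have px: "pe * x = 0" using pq qx by (metis mult.assoc mult_zero_left)
  have pxa: "pe = pe * (1 - x * a)" using px by (simp add: algebra_simps mult.assoc[symmetric])
  have w: "a - a^2 * d = a * pe" unfolding pe_def e_def by (simp add: algebra_simps power2_eq_square)
  have wpow: "(a * pe) ^ n = pe * r n * pe" if n: "n \<ge> 1" for n
  proof -
    obtain m where m: "n = Suc m" using n by (cases n) auto
    have "(a * pe) ^ n = a ^ n * pe" unfolding m by (rule idem_pow[OF pp pc])
    also have "\<dots> = a ^ n * pe * pe" using pp by (simp add: mult.assoc)
    also have "a ^ n * pe = pe * a ^ n" by (rule comm_pow[OF pc])
    also have "pe * a ^ n * pe = pe * ((1 - x * a) * a ^ n) * pe"
      using pxa by (metis mult.assoc)
    also have "(1 - x * a) * a ^ n = r n" unfolding r_def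
      by (simp add: algebra_simps mult.assoc power_commutes)
    finally show ?thesis .
  qed
  have qn: "quasinilpotent (a - a^2 * d)"
    unfolding w quasinilpotent_SG
  proof (rule SG_mono[OF sg, of "norm pe * norm pe"])
    show "eventually (\<lambda>n. norm ((a * pe) ^ n) \<le> norm pe * norm pe * norm (r n)) sequentially"
      using eventually_ge_at_top[of 1]
    proof eventually_elim
      case (elim n)
      have "norm ((a * pe) ^ n) \<le> norm (pe * r n) * norm pe"
        unfolding wpow[OF elim] by (rule norm_mult_ineq)
      also have "\<dots> \<le> (norm pe * norm (r n)) * norm pe"
        by (intro mult_right_mono norm_mult_ineq) auto
      finally show ?case by (simp add: algebra_simps)
    qed
  qed simp
  have gd: "is_gdrazin_inv a d" unfolding is_gdrazin_inv_def using ad2 comm qn by auto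
  have qd: "q * d = d" using qe ed by (metis mult.assoc)
  have qdaq: "q = d * a * q" using eq comm unfolding e_def by simp
  have ll: "lann d = lann q"
    unfolding lann_def
  proof (intro set_eqI iffI; simp)
    fix y assume "y * d = 0"
    then show "y * q = 0" using qdaq by (metis mult.assoc mult_zero_left)
  next
    fix y assume "y * q = 0"
    then show "y * d = 0" using qd by (metis mult.assoc mult_zero_left)
  qed
  have pr: "projection q" unfolding projection_def q_def using qq sq unfolding q_def
    by (simp add: power2_eq_square)
  show ?thesis using gd ll pr unfolding q_def by blast
qed


theorem theorem2p3:
  fixes a :: "'a::complex_banach_star_algebra_1"
  shows "(a \<in> gcEP_set \<longleftrightarrow>
            a \<in> gdrazin_set \<and> (\<exists>q. projection q \<and> lann (gdrazin a) = lann q))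
       \<and> (\<forall>q. a \<in> gcEP_set \<and> a \<in> gdrazin_set \<and> projection q \<and> lann (gdrazin a) = lann q
              \<longrightarrow> gcEP a = gdrazin a * q)"
proof -
  have gdthe: "gdrazin a = d" if "is_gdrazin_inv a d" for d
    unfolding gdrazin_def using that by (rule the_equality) (auto intro: gd_unique that)
  have gcthe: "gcEP a = x" if "is_gcEP_inv a x" for x
    unfolding gcEP_def using that by (rule the_equality) (auto intro: gcEP_unique that)
  have P1: "a \<in> gcEP_set \<longleftrightarrow>
            a \<in> gdrazin_set \<and> (\<exists>q. projection q \<and> lann (gdrazin a) = lann q)"
  proof
    assume "a \<in> gcEP_set"
    then obtain x where x: "is_gcEP_inv a x" unfolding gcEP_set_def by auto
    obtain d where d: "is_gdrazin_inv a d" "lann d = lann (a * x)" "projection (a * x)"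
      using gcEP_forward[OF x] by blast
    have "gdrazin a = d" using gdthe[OF d(1)] .
    then show "a \<in> gdrazin_set \<and> (\<exists>q. projection q \<and> lann (gdrazin a) = lann q)"
      using d unfolding gdrazin_set_def by auto
  next
    assume h: "a \<in> gdrazin_set \<and> (\<exists>q. projection q \<and> lann (gdrazin a) = lann q)"
    then obtain d where d: "is_gdrazin_inv a d" unfolding gdrazin_set_def by auto
    from h obtain q where q: "projection q" "lann (gdrazin a) = lann q" by auto
    have "gdrazin a = d" using gdthe[OF d] .
    then have "is_gcEP_inv a (d * q)" using gcEP_back[OF d q(1)] q(2) by simp
    then show "a \<in> gcEP_set" unfolding gcEP_set_def by auto
  qed
  have P2: "\<forall>q. a \<in> gcEP_set \<and> a \<in> gdrazin_set \<and> projection q \<and> lann (gdrazin a) = lann q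
              \<longrightarrow> gcEP a = gdrazin a * q"
  proof (intro allI impI)
    fix q assume h: "a \<in> gcEP_set \<and> a \<in> gdrazin_set \<and> projection q \<and> lann (gdrazin a) = lann q"
    then obtain d where d: "is_gdrazin_inv a d" unfolding gdrazin_set_def by auto
    have gd: "gdrazin a = d" using gdthe[OF d] .
    have "is_gcEP_inv a (d * q)" using gcEP_back[OF d] h gd by simp
    then show "gcEP a = gdrazin a * q" using gcthe gd by simp
  qed
  show ?thesis using P1 P2 by blast
qed

end
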